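(* Let $M_1>0$, $M_2>0$. Let $F(z)=\bar{z}G(z)+H(z)$, $z\in\mathbb{D}$, where $G,H$ are analytic in $\mathbb{D}$ with $G(0)=H(0)=0$, $G'(0)=H'(0)=1$, $|G(z)|\leq M_1$ and $|H(z)|\leq M_2$ for all $z\in\mathbb{D}$. Let $\rho_3$ be the unique root in $(0,1)$ of the equation $$1-\Big(M_2-\frac{1}{M_2}\Big)\frac{2r-r^2}{(1-r)^2}-\Big(M_1-\frac{1}{M_1}\Big)\frac{(3-2r)r^2}{(1-r)^2}-2r=0,$$ and $$\sigma_3=\rho_3-\rho_3^2-\Big(M_2-\frac{1}{M_2}\Big)\frac{\rho_3^2}{1-\rho_3}-\Big(M_1-\frac{1}{M_1}\Big)\frac{\rho_3^3}{1-\rho_3}.$$ Then $F$ is univalent in $\mathbb{D}_{\rho_3}$ and $F(\mathbb{D}_{\rho_3})\supseteq\mathbb{D}_{\sigma_3}$.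
   Context: $\mathbb{D}=\{z:|z|<1\}$ and $\mathbb{D}_r=\{z\in\mathbb{C}:|z|<r\}$. *)

theory Defs
  imports "HOL-Analysis.Analysis"
begin

end

theory Submission
  imports Defs "HOL-Complex_Analysis.Complex_Analysis" "HOL-Homology.Invariance_of_Domain"
begin


lemma key_ineq:
  fixes g z :: complex and M :: real
  assumes "M \<ge> 1" "norm g \<le> M * norm z"
  shows "norm (of_real M * (g - z)) \<le> norm (of_real (M^2) * z - g)"
proof -
  have h: "norm g ^ 2 \<le> (M * norm z)^2" using assms by (simp add: power_mono)
  have "(M^2 - 1) * ((M * norm z)^2 - norm g ^ 2) \<ge> 0" using h assms by simp
  then have P: "0 \<le> (M^2 - 1) * (M^2 * (Re z ^ 2 + Im z ^ 2) - (Re g ^ 2 + Im g ^ 2))"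
    by (simp add: cmod_power2 power_mult_distrib)
  moreover have "norm (of_real M * (g - z)) ^ 2 = M^2 * norm (g - z) ^ 2"
    by (simp add: norm_mult power_mult_distrib)
  moreover have "norm (g - z) ^ 2 = (Re g - Re z)^2 + (Im g - Im z)^2"
    by (simp add: cmod_power2)
  moreover have "norm (of_real (M^2) * z - g) ^ 2 = (M^2 * Re z - Re g)^2 + (M^2 * Im z - Im g)^2"
    by (simp add: cmod_power2)
  moreover have "M^2 * ((Re g - Re z)^2 + (Im g - Im z)^2) \<le> (M^2 * Re z - Re g)^2 + (M^2 * Im z - Im g)^2"
    using P by (simp add: power2_eq_square algebra_simps)
  ultimately have "norm (of_real M * (g - z)) ^ 2 \<le> norm (of_real (M^2) * z - g) ^ 2"
    by simp
  then show ?thesis by (simp add: power2_le_iff_abs_le)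
qed

lemma root_unity_facts:
  fixes k :: nat
  assumes "k \<ge> 1"
  defines "\<epsilon> \<equiv> exp (2 * of_real pi * \<i> / of_nat k)"
  shows "\<epsilon> ^ k = 1" "norm \<epsilon> = 1" "\<And>d. 0 < d \<Longrightarrow> d < k \<Longrightarrow> \<epsilon> ^ d \<noteq> 1"
proof -
  have pw: "\<epsilon> ^ d = exp (of_nat d * (2 * of_real pi * \<i> / of_nat k))" for d
    unfolding \<epsilon>_def by (subst exp_of_nat_mult[symmetric]) (rule refl)
  show "\<epsilon> ^ k = 1" unfolding pw using assms by simp
  show "norm \<epsilon> = 1" unfolding \<epsilon>_def by (simp add: norm_exp_eq_Re)
  fix d :: nat assume d: "0 < d" "d < k"
  show "\<epsilon> ^ d \<noteq> 1"
  proof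
    assume "\<epsilon> ^ d = 1"
    then obtain n :: int where n: "2 * pi * real d / real k = of_int (2 * n) * pi"
      unfolding pw exp_eq_1 by (auto simp: mult_ac)
    have kp: "real k \<noteq> 0" using assms by simp
    have "real d / real k = (2 * pi * real d / real k) / (2*pi)" by simp
    also have "\<dots> = of_int n" unfolding n by simp
    finally have "real d / real k = of_int n" .
    moreover have "0 < real d / real k" "real d / real k < 1" using d by auto
    ultimately show False by (metis of_int_0_less_iff of_int_less_1_iff not_less zero_less_one_class.zero_le_one int_one_le_iff_zero_less order_le_less_trans less_irrefl)
  qed
qed



lemma wiener_strict:
  fixes f :: "complex \<Rightarrow> complex" and M :: real
  assumes holf: "f holomorphic_on ball 0 1" and f0: "f 0 = 0" and df0: "deriv f 0 = 1"
    and bnd: "\<And>z. z \<in> ball 0 1 \<Longrightarrow> norm (f z) < M" and M1: "M > 1" and n: "n \<ge> 2"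
  shows "norm ((deriv ^^ n) f 0 / fact n) \<le> M - 1/M"
proof -
  define a where "a m = (deriv ^^ m) f 0 / fact m" for m
  define k where "k = n - 1"
  have k1: "k \<ge> 1" and nk: "n = k + 1" using n by (auto simp: k_def)
  have ser: "(\<lambda>m. a m * w^m) sums f w" if "w \<in> ball 0 1" for w
    using holomorphic_power_series[OF holf that] by (simp add: a_def)
  have a0: "a 0 = 0" using f0 by (simp add: a_def)
  have a1: "a 1 = 1" using df0 by (simp add: a_def)
  define \<epsilon> where "\<epsilon> = exp (2 * of_real pi * \<i> / of_nat k)"
  have \<epsilon>k: "\<epsilon> ^ k = 1" and n\<epsilon>: "norm \<epsilon> = 1" and \<epsilon>d: "\<And>d. 0 < d \<Longrightarrow> d < k \<Longrightarrow> \<epsilon> ^ d \<noteq> 1"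
    using root_unity_facts[OF k1] unfolding \<epsilon>_def by auto
  have \<epsilon>0: "\<epsilon> \<noteq> 0" using n\<epsilon> by auto
  have n\<epsilon>j: "norm (\<epsilon> ^ j) = 1" for j by (simp add: norm_power n\<epsilon>)
  define c where "c m = a m * (\<Sum>j<k. (\<epsilon>^j)^m / \<epsilon>^j) / of_nat k" for m
  define g where "g z = (\<Sum>j<k. f (\<epsilon>^j * z) / \<epsilon>^j) / of_nat k" for z
  have gser: "(\<lambda>m. c m * z^m) sums g z" if "z \<in> ball 0 1" for z
  proof -
    have "(\<lambda>m. \<Sum>j<k. a m * (\<epsilon>^j*z)^m / \<epsilon>^j) sums (\<Sum>j<k. f (\<epsilon>^j * z) / \<epsilon>^j)"
      apply (rule sums_sum) apply (rule sums_divide) apply (rule ser) 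
      using that n\<epsilon>j by (simp add: norm_mult)
    then have "(\<lambda>m. (\<Sum>j<k. a m * (\<epsilon>^j*z)^m / \<epsilon>^j) / of_nat k) sums g z"
      unfolding g_def by (rule sums_divide)
    moreover have "(\<Sum>j<k. a m * (\<epsilon>^j*z)^m / \<epsilon>^j) / of_nat k = c m * z^m" for m
      unfolding c_def by (simp add: sum_divide_distrib sum_distrib_left sum_distrib_right power_mult_distrib mult_ac)
    ultimately show ?thesis by simp
  qed
  have csum: "(\<Sum>j<k. (\<epsilon>^j)^m / \<epsilon>^j) = (if \<epsilon>^m = \<epsilon> then of_nat k else 0)" for m
  proof -
    define \<omega> where "\<omega> = \<epsilon>^m / \<epsilon>"
    have eq: "(\<epsilon>^j)^m / \<epsilon>^j = \<omega>^j" for j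
      unfolding \<omega>_def by (simp add: power_divide power_mult[symmetric] mult.commute)
    have \<omega>k: "\<omega>^k = 1" unfolding \<omega>_def
      by (simp add: power_divide power_mult[symmetric] mult.commute) (simp add: power_mult \<epsilon>k \<epsilon>0)
    show ?thesis
    proof (cases "\<epsilon>^m = \<epsilon>")
      case True
      then have "\<omega> = 1" using \<epsilon>0 by (simp add: \<omega>_def)
      then show ?thesis using True by (simp add: eq)
    next
      case False
      then have "\<omega> \<noteq> 1" using \<epsilon>0 by (simp add: \<omega>_def)
      then show ?thesis using False by (simp add: eq geometric_sum \<omega>k)
    qed
  qed
  have c0: "c 0 = 0" by (simp add: c_def a0)
  have c1: "c 1 = 1" using k1 a1 by (simp add: c_def \<epsilon>0)
  have cmid: "c m = 0" if "2 \<le> m" "m \<le> k" for m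
  proof -
    have "\<epsilon>^m = \<epsilon> * \<epsilon>^(m-1)" using that by (metis Suc_diff_1 less_le_trans pos2 power_Suc)
    moreover have "\<epsilon>^(m-1) \<noteq> 1" using that by (intro \<epsilon>d) auto
    ultimately have "\<epsilon>^m \<noteq> \<epsilon>" using \<epsilon>0 by auto
    then show ?thesis by (simp add: c_def csum)
  qed
  have ck: "c (k+1) = a (k+1)"
  proof -
    have "\<epsilon>^(k+1) = \<epsilon>" using \<epsilon>k by simp
    then show ?thesis using k1 unfolding c_def csum by simp
  qed
  have holg: "g holomorphic_on ball 0 1"
  proof -
    have "(\<lambda>z. f (\<epsilon>^j * z)) holomorphic_on ball 0 1" for j
    proof -
      have "((\<lambda>z. f z) \<circ> (\<lambda>z. \<epsilon>^j * z)) holomorphic_on ball 0 1"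
        by (rule holomorphic_on_compose_gen[OF _ holf]) (auto intro!: holomorphic_intros simp: norm_mult n\<epsilon>j)
      then show ?thesis by (simp add: o_def)
    qed
    then show ?thesis unfolding g_def using \<epsilon>0
      by (intro holomorphic_intros) auto
  qed
  have gbnd: "norm (g z) < M" if "z \<in> ball 0 1" for z
  proof -
    have "norm (\<Sum>j<k. f (\<epsilon>^j * z) / \<epsilon>^j) \<le> (\<Sum>j<k. norm (f (\<epsilon>^j * z) / \<epsilon>^j))"
      by (rule norm_sum)
    also have "\<dots> < (\<Sum>j<k. M)"
      using k1 that by (intro sum_strict_mono) (auto simp: norm_divide n\<epsilon>j norm_mult lessThan_empty_iff intro!: bnd)
    finally show ?thesis using k1 by (simp add: g_def norm_divide field_simps)
  qed
  have g0: "g 0 = 0" by (simp add: g_def f0)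
  have gM: "norm (g z) \<le> M * norm z" if "z \<in> ball 0 1" for z
  proof -
    have "norm (g z / M) \<le> norm z"
      apply (rule Schwarz_Lemma(1)[of "\<lambda>z. g z / M"])
      using holg M1 g0 gbnd that by (auto intro!: holomorphic_intros simp: norm_divide)
    then show ?thesis using M1 by (simp add: norm_divide field_simps)
  qed
  define p where "p z = (if z = 0 then a (k+1) else (g z - z) / z^(k+1))" for z
  have pser: "(\<lambda>m. c (m + (k+1)) * z^m) sums p z" if z: "z \<in> ball 0 1" for z
  proof (cases "z = 0")
    case True
    then show ?thesis using powser_sums_zero[of "\<lambda>m. c (m + (k+1))"] using ck by (simp add: p_def)
  next
    case False
    have A: "(\<lambda>m. c (m + (k+1)) * z^(m + (k+1))) sums (g z - (\<Sum>m<k+1. c m * z^m))"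
      by (rule sums_split_initial_segment[OF gser[OF z]])
    have "(\<Sum>m<k+1. c m * z^m) = (\<Sum>m<k+1. if m = 1 then z else 0)"
    proof (rule sum.cong)
      fix m assume "m \<in> {..<k+1}"
      then show "c m * z^m = (if m = 1 then z else 0)"
        using c0 c1 cmid[of m] by (cases "m = 0"; cases "m = 1") auto
    qed simp
    also have "\<dots> = z" by (subst sum.delta) (use k1 in auto)
    finally have eqz: "(\<Sum>m<k+1. c m * z^m) = z" .
    from A have "(\<lambda>m. c (m + (k+1)) * z^(m + (k+1))) sums (g z - z)"
      unfolding eqz .
    then have "(\<lambda>m. c (m + (k+1)) * z^(m + (k+1)) / z^(k+1)) sums ((g z - z) / z^(k+1))"
      by (rule sums_divide)
    then show ?thesis using False by (simp add: p_def power_add)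
  qed
  have pcont: "(p \<longlongrightarrow> p 0) (at 0)"
  proof -
    have "(p \<longlongrightarrow> c (0 + (k+1))) (at 0)"
      by (rule powser_limit_0_strong[of 1 "\<lambda>m. c (m + (k+1))" p]) (use pser in simp_all)
    then show ?thesis using ck by (simp add: p_def)
  qed
  have holp: "p holomorphic_on ball 0 1"
  proof (rule no_isolated_singularity'[of "{0}"])
    show "(p \<longlongrightarrow> p z) (at z within ball 0 1)" if "z \<in> {0}" for z
      using that tendsto_within_subset[OF pcont, of "ball 0 1"] by auto
    have "(\<lambda>z. (g z - z) / z^(k+1)) holomorphic_on ball 0 1 - {0}"
      by (intro holomorphic_intros holomorphic_on_subset[OF holg]) auto
    then show "p holomorphic_on ball 0 1 - {0}"
      by (rule holomorphic_transform) (auto simp: p_def)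
  qed auto
  have gp: "g z = z + z^(k+1) * p z" if "z \<in> ball 0 1" for z
    by (cases "z = 0") (auto simp: p_def g0)
  define q where "q z = of_real (M^2) - 1 - z^k * p z" for z
  have zq: "z * q z = of_real (M^2) * z - g z" if "z \<in> ball 0 1" for z
    using gp[OF that] by (simp add: q_def algebra_simps)
  have qnz: "q z \<noteq> 0" if z: "z \<in> ball 0 1" for z
  proof (cases "z = 0")
    case True
    have q0: "q 0 = of_real (M^2 - 1)" using k1 by (simp add: q_def zero_power)
    have "1 < M^2" using M1 by (rule one_less_power) simp
    then have "M^2 - 1 \<noteq> 0" by simp
    then show ?thesis using True q0 by (metis of_real_eq_0_iff)
  next
    case False
    show ?thesis
    proof
      assume "q z = 0"
      then have "g z = of_real (M^2) * z" using zq[OF z] by simp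
      then have "norm (g z) = M^2 * norm z" by (simp add: norm_mult norm_power)
      moreover have "M * norm z < M^2 * norm z" using M1 False by (simp add: power2_eq_square)
      ultimately show False using gM[OF z] by simp
    qed
  qed
  define v where "v z = of_real M * p z / q z" for z
  have holv: "v holomorphic_on ball 0 1"
    unfolding v_def q_def using qnz holp by (intro holomorphic_intros) (auto simp: q_def)
  have vbnd: "norm (v z) * norm z ^ k \<le> 1" if z: "z \<in> ball 0 1" "z \<noteq> 0" for z
  proof -
    have "norm (of_real M * (g z - z)) \<le> norm (of_real (M^2) * z - g z)"
      using key_ineq[OF _ gM[OF z(1)]] M1 by simp
    then have "norm (of_real M * (z^(k+1) * p z)) \<le> norm (z * q z)"
      using gp[OF z(1)] zq[OF z(1)] by simp
    then have "norm z * (M * norm z ^ k * norm (p z)) \<le> norm z * norm (q z)"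
      using M1 by (simp add: norm_mult norm_power mult_ac)
    then have "M * norm z ^ k * norm (p z) \<le> norm (q z)" using z by simp
    then show ?thesis using qnz[OF z(1)] M1
      by (simp add: v_def norm_divide norm_mult field_simps)
  qed
  have v0: "norm (v 0) \<le> 1"
  proof (rule ccontr)
    assume "\<not> norm (v 0) \<le> 1"
    then have big: "norm (v 0) > 1" by simp
    define t where "t = 1 / norm (v 0)"
    have i1: "0 < t" unfolding t_def using big by (metis less_trans zero_less_divide_1_iff zero_less_one)
    have i2: "t < 1" unfolding t_def using big by (simp add: divide_less_eq)
    have vnz: "norm (v 0) \<noteq> 0" using big by linarith
    have tv: "norm (v 0) * t = 1" unfolding t_def using vnz by simp
    define s where "s = root k ((1 + t) / 2)"
    have t01: "0 < (1 + t) / 2" using i1 by simp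
    have t02: "(1 + t) / 2 < 1" using i2 by simp
    note t0 = t01 t02
    have s0: "0 < s" unfolding s_def by (rule real_root_gt_zero) (use t0 k1 in auto)
    have s1: "s < 1" unfolding s_def using t0 k1 real_root_lt_1_iff[of k] by auto
    have sk: "s ^ k = (1 + t) / 2" unfolding s_def by (rule real_root_pow_pos) (use t0 k1 in auto)
    have "norm ((deriv ^^ 0) v 0) \<le> fact 0 * (1 / s^k) / s^0"
    proof (rule Cauchy_inequality)
      show "v holomorphic_on ball 0 s" by (rule holomorphic_on_subset[OF holv]) (use s1 in auto)
      show "continuous_on (cball 0 s) v"
        by (rule continuous_on_subset[OF holomorphic_on_imp_continuous_on[OF holv]]) (use s1 in auto)
      show "0 < s" by (rule s0)
      fix x :: complex assume x: "norm (0 - x) = s"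
      then have "norm (v x) * s ^ k \<le> 1" using vbnd[of x] s0 s1 by auto
      then show "norm (v x) \<le> 1 / s^k" using s0 by (simp add: field_simps)
    qed
    then have "norm (v 0) * s^k \<le> 1" using s0 by (simp add: field_simps)
    then have "norm (v 0) * (1 + t) \<le> 2" unfolding sk by simp
    then show False using big tv by (simp add: algebra_simps)
  qed
  have "1 < M^2" using M1 by (rule one_less_power) simp
  then have M2p: "M^2 - 1 > 0" by simp
  have "v 0 = of_real M * a (k+1) / of_real (M^2 - 1)" using k1 by (simp add: v_def p_def q_def zero_power)
  then have "norm (v 0) = M * norm (a (k+1)) / (M^2 - 1)" using M1 M2p
    by (simp add: norm_divide norm_mult del: of_real_diff of_real_power)
  then have "M * norm (a (k+1)) \<le> M^2 - 1" using v0 M2p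
    by (simp add: divide_le_eq)
  then have "norm (a (k+1)) \<le> M - 1/M" using M1 by (simp add: field_simps power2_eq_square)
  then show ?thesis by (simp add: a_def nk)
qed



lemma M_ge_1:
  fixes f :: "complex \<Rightarrow> complex" and M :: real
  assumes holf: "f holomorphic_on ball 0 1" and df0: "deriv f 0 = 1"
    and bnd: "\<And>z. z \<in> ball 0 1 \<Longrightarrow> norm (f z) \<le> M"
  shows "M \<ge> 1"
proof (rule ccontr)
  assume "\<not> M \<ge> 1"
  then have M1: "M < 1" by simp
  have M0: "M \<ge> 0" using bnd[of 0] norm_ge_zero by (metis centre_in_ball order_trans zero_less_one)
  define s where "s = (M + 1) / 2"
  have s0: "0 < s" and s1: "s < 1" and sM: "M < s" using M0 M1 by (auto simp: s_def)
  have "norm ((deriv ^^ 1) f 0) \<le> fact 1 * M / s^1"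
  proof (rule Cauchy_inequality)
    show "f holomorphic_on ball 0 s" by (rule holomorphic_on_subset[OF holf]) (use s1 in auto)
    show "continuous_on (cball 0 s) f"
      by (rule continuous_on_subset[OF holomorphic_on_imp_continuous_on[OF holf]]) (use s1 in auto)
    show "0 < s" by (rule s0)
    fix x :: complex assume "norm (0 - x) = s"
    then show "norm (f x) \<le> M" using s1 by (intro bnd) auto
  qed
  then have "1 \<le> M / s" using df0 by simp
  then have "s \<le> M" using s0 by (simp add: field_simps)
  then show False using sM by simp
qed

lemma coeff_bound:
  fixes f :: "complex \<Rightarrow> complex" and M :: real
  assumes holf: "f holomorphic_on ball 0 1" and f0: "f 0 = 0" and df0: "deriv f 0 = 1"
    and bnd: "\<And>z. z \<in> ball 0 1 \<Longrightarrow> norm (f z) \<le> M" and n: "n \<ge> 2"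
  shows "norm ((deriv ^^ n) f 0 / fact n) \<le> M - 1/M"
proof (rule field_le_epsilon)
  fix e :: real assume e: "0 < e"
  have M1: "M \<ge> 1" by (rule M_ge_1[OF holf df0 bnd])
  define M' where "M' = M + e/2"
  have M'1: "M' > 1" using M1 e by (simp add: M'_def)
  have "norm ((deriv ^^ n) f 0 / fact n) \<le> M' - 1/M'"
    by (rule wiener_strict[OF holf f0 df0 _ M'1 n]) (use bnd e in \<open>force simp: M'_def\<close>)
  also have "\<dots> \<le> M - 1/M + e"
  proof -
    have "1/M - 1/M' = (e/2) / (M * M')" using M1 M'1 by (simp add: M'_def field_simps)
    also have "\<dots> \<le> e/2" using M1 M'1 e
      by (simp add: divide_le_eq) (metis less_le_not_le mult_le_cancel_left1 mult_mono' nless_le order.trans zero_le_one)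
    finally show ?thesis unfolding M'_def by simp
  qed
  finally show "norm ((deriv ^^ n) f 0 / fact n) \<le> M - 1/M + e" .
qed

lemma series_bounds:
  fixes f :: "complex \<Rightarrow> complex" and \<mu> :: real
  assumes holf: "f holomorphic_on ball 0 1" and f0: "f 0 = 0" and df0: "deriv f 0 = 1"
    and cb: "\<forall>n\<ge>2. norm ((deriv ^^ n) f 0 / fact n) \<le> \<mu>"
    and z: "z \<in> ball 0 1"
  shows "norm (f z - z) \<le> \<mu> * norm z ^ 2 / (1 - norm z)"
    and "norm (deriv f z - 1) \<le> \<mu> * (1 / (1 - norm z)^2 - 1)"
proof -
  define a where "a m = (deriv ^^ m) f 0 / fact m" for m
  define r where "r = norm z"
  have r0: "0 \<le> r" and r1: "r < 1" using z by (auto simp: r_def)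
  have ser: "(\<lambda>m. a m * z^m) sums f z"
    using holomorphic_power_series[OF holf z] by (simp add: a_def)
  have a0: "a 0 = 0" using f0 by (simp add: a_def)
  have a1: "a 1 = 1" using df0 by (simp add: a_def)
  have cba: "norm (a n) \<le> \<mu>" if "n \<ge> 2" for n using cb that by (simp add: a_def)
  have \<mu>0: "0 \<le> \<mu>" using cb norm_ge_zero[of "(deriv ^^ 2) f 0 / fact 2"] by (meson order_trans order_refl)
  have A: "(\<lambda>m. a (m+2) * z^(m+2)) sums (f z - (\<Sum>m<2. a m * z^m))"
    by (rule sums_split_initial_segment[OF ser])
  have "(\<Sum>m<2. a m * z^m) = z" using a0 a1 by (simp add: numeral_2_eq_2)
  with A have A': "(\<lambda>m. a (m+2) * z^(m+2)) sums (f z - z)" by simp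
  have geo: "(\<lambda>m. \<mu> * r^2 * r^m) sums (\<mu> * r^2 * (1 / (1 - r)))"
    by (rule sums_mult, rule geometric_sums) (use r0 r1 in simp)
  have "norm (f z - z) = norm (suminf (\<lambda>m. a (m+2) * z^(m+2)))" using A' sums_unique by metis
  also have "\<dots> \<le> (suminf (\<lambda>m. \<mu> * r^2 * r^m))"
  proof (rule norm_suminf_le)
    fix m
    have "norm (a (m+2) * z^(m+2)) = norm (a (m+2)) * r^(m+2)" by (simp add: norm_mult norm_power r_def)
    also have "\<dots> \<le> \<mu> * r^(m+2)" by (rule mult_right_mono[OF cba]) (use r0 in auto)
    also have "\<mu> * r^(m+2) = \<mu> * r^2 * r^m" by (simp add: power_add power2_eq_square mult_ac)
    finally show "norm (a (m+2) * z^(m+2)) \<le> \<mu> * r^2 * r^m" .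
  qed (use geo in \<open>simp add: sums_iff\<close>)
  also have "\<dots> = \<mu> * r^2 * (1 / (1 - r))" using geo sums_unique by metis
  finally show "norm (f z - z) \<le> \<mu> * norm z ^ 2 / (1 - norm z)" by (simp add: r_def)
  have holdf: "deriv f holomorphic_on ball 0 1" by (rule holomorphic_deriv[OF holf]) simp
  define b where "b m = (deriv ^^ Suc m) f 0 / fact m" for m
  have dser: "(\<lambda>m. b m * z^m) sums deriv f z"
  proof -
    have "(\<lambda>m. (deriv ^^ m) (deriv f) 0 / fact m * (z - 0)^m) sums deriv f z"
      by (rule holomorphic_power_series[OF holdf z])
    moreover have "(deriv ^^ m) (deriv f) = (deriv ^^ Suc m) f" for m
      by (simp only: funpow_Suc_right o_def)
    ultimately show ?thesis by (simp add: b_def)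
  qed
  have b0: "b 0 = 1" using df0 by (simp add: b_def)
  have bb: "norm (b m) \<le> \<mu> * of_nat (Suc m)" if "m \<ge> 1" for m
  proof -
    have fs: "(fact (Suc m) :: complex) = of_nat (Suc m) * fact m" by (rule fact_Suc)
    have sn: "(of_nat (Suc m) :: complex) \<noteq> 0" by (rule of_nat_neq_0)
    have "b m = of_nat (Suc m) * a (Suc m)" unfolding a_def b_def fs using sn by (simp del: of_nat_Suc)
    then have "norm (b m) = of_nat (Suc m) * norm (a (Suc m))" by (simp only: norm_mult norm_of_nat)
    also have "\<dots> \<le> of_nat (Suc m) * \<mu>" using cba[of "Suc m"] that
      by (intro mult_left_mono) auto
    finally show ?thesis by (simp add: mult_ac)
  qed
  have B: "(\<lambda>m. b (m+1) * z^(m+1)) sums (deriv f z - (\<Sum>m<1. b m * z^m))"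
    by (rule sums_split_initial_segment[OF dser])
  then have B': "(\<lambda>m. b (m+1) * z^(m+1)) sums (deriv f z - 1)" using b0 by simp
  have gd: "(\<lambda>n. of_nat (Suc n) * r ^ n) sums (1 / (1 - r)^2)"
    by (rule geometric_deriv_sums) (use r0 r1 in simp)
  have gd1: "(\<lambda>n. of_nat (Suc (n+1)) * r ^ (n+1)) sums (1 / (1 - r)^2 - (\<Sum>n<1. of_nat (Suc n) * r ^ n))"
    by (rule sums_split_initial_segment[OF gd])
  then have gd2: "(\<lambda>n. \<mu> * (of_nat (Suc (n+1)) * r ^ (n+1))) sums (\<mu> * (1 / (1 - r)^2 - 1))"
    by (intro sums_mult) simp
  have "norm (deriv f z - 1) = norm (suminf (\<lambda>m. b (m+1) * z^(m+1)))" using B' sums_unique by metis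
  also have "\<dots> \<le> (suminf (\<lambda>n. \<mu> * (of_nat (Suc (n+1)) * r ^ (n+1))))"
  proof (rule norm_suminf_le)
    fix m
    have "norm (b (m+1) * z^(m+1)) = norm (b (m+1)) * r^(m+1)" by (simp add: norm_mult norm_power r_def)
    also have "\<dots> \<le> (\<mu> * of_nat (Suc (m+1))) * r^(m+1)" by (rule mult_right_mono[OF bb]) (use r0 in auto)
    finally show "norm (b (m+1) * z^(m+1)) \<le> \<mu> * (of_nat (Suc (m+1)) * r ^ (m+1))" by (simp add: mult_ac)
  qed (use gd2 in \<open>simp add: sums_iff\<close>)
  also have "\<dots> = \<mu> * (1 / (1 - r)^2 - 1)" using gd2 sums_unique by metis
  finally show "norm (deriv f z - 1) \<le> \<mu> * (1 / (1 - norm z)^2 - 1)" by (simp add: r_def)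
qed


lemma key_alg:
  fixes \<rho> \<mu>1 \<mu>2 :: real
  assumes "\<rho> < 1"
  shows "1 - \<mu>2 * (1 / (1 - \<rho>)^2 - 1) - \<rho> * (1 + \<mu>1 * (1 / (1 - \<rho>)^2 - 1)) - (\<rho> + \<mu>1 * \<rho>^2 / (1 - \<rho>)) = 1 - \<mu>2 * ((2 * \<rho> - \<rho>^2) / (1 - \<rho>)^2)
           - \<mu>1 * ((3 - 2 * \<rho>) * \<rho>^2 / (1 - \<rho>)^2) - 2 * \<rho>"
proof -
  have t: "1 - \<rho> \<noteq> 0" using assms by simp
  have t2: "(1 - \<rho>)^2 \<noteq> 0" using assms by simp
  have n1: "2 * \<rho> - \<rho>^2 = 1 - (1 - \<rho>)^2" by (simp add: power2_eq_square algebra_simps)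
  have e1: "(2 * \<rho> - \<rho>^2) / (1 - \<rho>)^2 = 1 / (1 - \<rho>)^2 - 1"
    unfolding n1 using t2 by (simp add: diff_divide_distrib)
  have q: "\<rho>^2 / (1 - \<rho>) = \<rho>^2 * (1 - \<rho>) / (1 - \<rho>)^2" using t by (simp add: power2_eq_square)
  have n2: "\<rho> * (2 * \<rho> - \<rho>^2) + \<rho>^2 * (1 - \<rho>) = (3 - 2 * \<rho>) * \<rho>^2"
    by (simp add: power2_eq_square algebra_simps)
  have e2: "(3 - 2 * \<rho>) * \<rho>^2 / (1 - \<rho>)^2 = \<rho> * (1 / (1 - \<rho>)^2 - 1) + \<rho>^2 / (1 - \<rho>)"
    unfolding q e1[symmetric] n2[symmetric] by (simp add: add_divide_distrib)
  show ?thesis unfolding e1 e2 by (simp add: algebra_simps)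
qed

theorem theorem2p3:
  fixes G H :: "complex \<Rightarrow> complex" and M1 M2 \<rho>3 \<sigma>3 :: real
    and F :: "complex \<Rightarrow> complex"
  assumes "M1 > 0" and "M2 > 0"
    and "G holomorphic_on ball 0 1" and "H holomorphic_on ball 0 1"
    and "G 0 = 0" and "H 0 = 0"
    and "deriv G 0 = 1" and "deriv H 0 = 1"
    and "\<And>z. z \<in> ball 0 1 \<Longrightarrow> norm (G z) \<le> M1"
    and "\<And>z. z \<in> ball 0 1 \<Longrightarrow> norm (H z) \<le> M2"
    and "\<And>z. F z = cnj z * G z + H z"
    and "0 < \<rho>3" and "\<rho>3 < 1"
    and "1 - (M2 - 1 / M2) * ((2 * \<rho>3 - \<rho>3^2) / (1 - \<rho>3)^2)
           - (M1 - 1 / M1) * ((3 - 2 * \<rho>3) * \<rho>3^2 / (1 - \<rho>3)^2) - 2 * \<rho>3 = 0"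
    and "\<sigma>3 = \<rho>3 - \<rho>3^2 - (M2 - 1 / M2) * (\<rho>3^2 / (1 - \<rho>3))
                - (M1 - 1 / M1) * (\<rho>3^3 / (1 - \<rho>3))"
  shows "inj_on F (ball 0 \<rho>3) \<and> ball 0 \<sigma>3 \<subseteq> F ` ball 0 \<rho>3"
proof -
  note holG = assms(3) and holH = assms(4) and G0 = assms(5) and H0 = assms(6)
  note dG = assms(7) and dH = assms(8) and bG = assms(9) and bH = assms(10)
  define \<rho> where "\<rho> = \<rho>3"
  have \<rho>0: "0 < \<rho>" and \<rho>1: "\<rho> < 1" using assms(12,13) by (auto simp: \<rho>_def)
  define \<mu>1 where "\<mu>1 = M1 - 1 / M1"
  define \<mu>2 where "\<mu>2 = M2 - 1 / M2"
  have M1: "M1 \<ge> 1" by (rule M_ge_1[OF holG dG bG])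
  have M2: "M2 \<ge> 1" by (rule M_ge_1[OF holH dH bH])
  have "1 / M1 \<le> 1" "1 / M2 \<le> 1" using M1 M2 by simp_all
  then have "1 / M1 \<le> M1" "1 / M2 \<le> M2" using M1 M2 by linarith+
  then have \<mu>10: "\<mu>1 \<ge> 0" and \<mu>20: "\<mu>2 \<ge> 0" by (simp_all add: \<mu>1_def \<mu>2_def)
  have cbG: "\<forall>n\<ge>2. norm ((deriv ^^ n) G 0 / fact n) \<le> \<mu>1"
    unfolding \<mu>1_def using coeff_bound[OF holG G0 dG bG] by blast
  have cbH: "\<forall>n\<ge>2. norm ((deriv ^^ n) H 0 / fact n) \<le> \<mu>2"
    unfolding \<mu>2_def using coeff_bound[OF holH H0 dH bH] by blast
  note sbG = series_bounds[OF holG G0 dG cbG]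
  note sbH = series_bounds[OF holH H0 dH cbH]
  have Fdef: "F = (\<lambda>z. cnj z * G z + H z)" using assms(11) by (intro ext) simp
  define A where "A = \<mu>2 * (1 / (1 - \<rho>)^2 - 1)"
  define D where "D = 1 + \<mu>1 * (1 / (1 - \<rho>)^2 - 1)"
  define E where "E = \<rho> + \<mu>1 * \<rho>^2 / (1 - \<rho>)"
  have key: "1 - A - \<rho> * D - E = 0"
  proof -
    have n: "1 - \<rho> \<noteq> 0" using \<rho>1 by simp
    have "1 - A - \<rho> * D - E = 1 - \<mu>2 * ((2 * \<rho> - \<rho>^2) / (1 - \<rho>)^2)
           - \<mu>1 * ((3 - 2 * \<rho>) * \<rho>^2 / (1 - \<rho>)^2) - 2 * \<rho>"
      unfolding A_def D_def E_def by (rule key_alg[OF \<rho>1])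
    also have "\<dots> = 0" using assms(14) by (simp add: \<rho>_def \<mu>1_def \<mu>2_def)
    finally show ?thesis .
  qed
  have mono: "1 / (1 - norm z)^2 \<le> 1 / (1 - \<rho>)^2" if "norm z < \<rho>" for z :: complex
  proof -
    have "0 < 1 - \<rho>" using \<rho>1 by simp
    moreover have "1 - \<rho> \<le> 1 - norm z" using that by simp
    ultimately have "(1 - \<rho>)^2 \<le> (1 - norm z)^2" by (intro power_mono) auto
    moreover have "0 < 1 - norm z" using that \<rho>1 by simp
    ultimately show ?thesis using \<open>0 < 1 - \<rho>\<close> by (intro divide_left_mono) auto
  qed
  have inball: "z \<in> ball 0 1" if "z \<in> ball 0 \<rho>" for z using that \<rho>1 by auto
  have dHb: "norm (deriv H z - 1) \<le> A" if "z \<in> ball 0 \<rho>" for z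
  proof -
    have "norm (deriv H z - 1) \<le> \<mu>2 * (1 / (1 - norm z)^2 - 1)" by (rule sbH(2)[OF inball[OF that]])
    also have "\<dots> \<le> A" unfolding A_def using mono[of z] that \<mu>20 by (intro mult_left_mono) auto
    finally show ?thesis .
  qed
  have dGb: "norm (deriv G z) \<le> D" if "z \<in> ball 0 \<rho>" for z
  proof -
    have "norm (deriv G z - 1) \<le> \<mu>1 * (1 / (1 - norm z)^2 - 1)" by (rule sbG(2)[OF inball[OF that]])
    also have "\<dots> \<le> \<mu>1 * (1 / (1 - \<rho>)^2 - 1)" using mono[of z] that \<mu>10 by (intro mult_left_mono) auto
    finally have "norm (deriv G z - 1) \<le> \<mu>1 * (1 / (1 - \<rho>)^2 - 1)" .
    moreover have "norm (deriv G z) \<le> norm (deriv G z - 1) + 1" using norm_triangle_ineq2[of "deriv G z" 1] by simp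
    ultimately show ?thesis unfolding D_def by linarith
  qed
  have Gb: "norm (G z) < E" if "z \<in> ball 0 \<rho>" for z
  proof -
    have nz: "norm z < \<rho>" using that by simp
    have "norm (G z - z) \<le> \<mu>1 * norm z ^ 2 / (1 - norm z)" by (rule sbG(1)[OF inball[OF that]])
    also have "\<dots> \<le> \<mu>1 * \<rho>^2 / (1 - \<rho>)"
    proof -
      have "norm z ^ 2 \<le> \<rho>^2" using nz by (intro power_mono) auto
      moreover have "1 / (1 - norm z) \<le> 1 / (1 - \<rho>)" using nz \<rho>1 by (intro divide_left_mono) auto
      ultimately have "norm z ^ 2 * (1 / (1 - norm z)) \<le> \<rho>^2 * (1 / (1 - \<rho>))"
        using nz \<rho>1 by (intro mult_mono) auto
      then show ?thesis using \<mu>10 by (simp add: mult_left_mono[OF _ \<mu>10] divide_inverse mult.assoc)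
    qed
    finally have "norm (G z - z) \<le> \<mu>1 * \<rho>^2 / (1 - \<rho>)" .
    moreover have "norm (G z) \<le> norm (G z - z) + norm z" using norm_triangle_ineq2[of "G z" z] by simp
    ultimately show ?thesis unfolding E_def using nz by linarith
  qed
  have convb: "convex (ball (0::complex) \<rho>)" by simp
  have LH: "norm ((H x - x) - (H y - y)) \<le> A * norm (x - y)" if "x \<in> ball 0 \<rho>" "y \<in> ball 0 \<rho>" for x y
  proof (rule field_differentiable_bound[OF convb _ dHb that])
    fix z :: complex assume z: "z \<in> ball 0 \<rho>"
    have "(H has_field_derivative deriv H z) (at z within ball 0 \<rho>)"
      by (rule holomorphic_derivI[OF holH]) (use inball[OF z] in auto)
    then show "((\<lambda>z. H z - z) has_field_derivative deriv H z - 1) (at z within ball 0 \<rho>)"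
      by (intro derivative_eq_intros) auto
  qed
  have LG: "norm (G x - G y) \<le> D * norm (x - y)" if "x \<in> ball 0 \<rho>" "y \<in> ball 0 \<rho>" for x y
  proof (rule field_differentiable_bound[OF convb _ dGb that])
    fix z :: complex assume z: "z \<in> ball 0 \<rho>"
    show "(G has_field_derivative deriv G z) (at z within ball 0 \<rho>)"
      by (rule holomorphic_derivI[OF holG]) (use inball[OF z] in auto)
  qed
  have "norm (deriv G 0) \<le> D" using dGb \<rho>0 by simp
  then have D0: "D \<ge> 0" by (rule order_trans[OF norm_ge_zero])
  have inj: "inj_on F (ball 0 \<rho>)"
  proof (rule inj_onI, rule ccontr)
    fix z1 z2 assume z1: "z1 \<in> ball 0 \<rho>" and z2: "z2 \<in> ball 0 \<rho>" and eq: "F z1 = F z2" and ne: "z1 \<noteq> z2"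
    define d where "d = z2 - z1"
    define X where "X = (H z2 - z2) - (H z1 - z1)"
    define Y where "Y = cnj z2 * (G z2 - G z1)"
    define Z where "Z = cnj d * G z1"
    have "F z2 - F z1 = d + X + Y + Z" unfolding Fdef d_def X_def Y_def Z_def
      by (simp add: algebra_simps)
    then have 0: "d + X + Y + Z = 0" using eq by simp
    have dpos: "norm d > 0" using ne by (simp add: d_def)
    have nX: "norm X \<le> A * norm d" unfolding X_def d_def by (rule LH[OF z2 z1])
    have nY: "norm Y \<le> \<rho> * (D * norm d)"
    proof -
      have "norm Y = norm z2 * norm (G z2 - G z1)" by (simp add: Y_def norm_mult)
      also have "\<dots> \<le> \<rho> * (D * norm d)"
        using z2 LG[OF z2 z1] \<rho>0 by (intro mult_mono) (auto simp: d_def)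
      finally show ?thesis .
    qed
    have nZ: "norm Z < norm d * E" unfolding Z_def using Gb[OF z1] dpos by (simp add: norm_mult)
    have "d = -(X + Y + Z)" using 0 by (simp only: eq_neg_iff_add_eq_0 add.assoc)
    then have "norm d = norm (X + Y + Z)" by (simp only: norm_minus_cancel)
    also have "\<dots> \<le> norm X + norm Y + norm Z"
      using norm_triangle_ineq[of "X + Y" Z] norm_triangle_ineq[of X Y] by linarith
    finally have "norm d < A * norm d + \<rho> * (D * norm d) + norm d * E" using nX nY nZ by linarith
    then have "norm d * (1 - A - \<rho> * D - E) < 0" by (simp add: algebra_simps)
    then show False using key by simp
  qed
  have contF: "continuous_on (ball 0 1) F"
    unfolding Fdef using holomorphic_on_imp_continuous_on[OF holG] holomorphic_on_imp_continuous_on[OF holH]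
    by (intro continuous_intros) auto
  have openU: "open (F ` ball 0 \<rho>)"
    by (rule invariance_of_domain[OF continuous_on_subset[OF contF] _ inj]) (use \<rho>1 in auto)
  define K where "K = F ` cball 0 \<rho>"
  have closedK: "closed K" unfolding K_def
    by (intro compact_imp_closed compact_continuous_image continuous_on_subset[OF contF]) (use \<rho>1 in auto)
  have UK: "F ` ball 0 \<rho> \<subseteq> K" unfolding K_def by auto
  have sph: "norm (F z) \<ge> \<sigma>3" if "norm z = \<rho>" for z
  proof -
    have zb: "z \<in> ball 0 1" using that \<rho>1 by simp
    have h1: "norm (H z - z) \<le> \<mu>2 * \<rho>^2 / (1 - \<rho>)" using sbH(1)[OF zb] that by simp
    have h2: "norm (G z - z) \<le> \<mu>1 * \<rho>^2 / (1 - \<rho>)" using sbG(1)[OF zb] that by simp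
    have "norm (H z) \<ge> \<rho> - \<mu>2 * \<rho>^2 / (1 - \<rho>)"
      using h1 norm_triangle_ineq2[of z "H z"] norm_minus_commute[of z "H z"] that by linarith
    moreover have nG: "norm (G z) \<le> \<rho> + \<mu>1 * \<rho>^2 / (1 - \<rho>)"
      using h2 norm_triangle_ineq2[of "G z" z] that by simp
    moreover have "norm (F z) \<ge> norm (H z) - \<rho> * norm (G z)"
    proof -
      have "norm (H z) \<le> norm (F z) + norm (cnj z * G z)"
        using norm_triangle_ineq4[of "F z" "cnj z * G z"] by (simp add: Fdef)
      then show ?thesis using that by (simp add: norm_mult)
    qed
    moreover have "\<rho> * norm (G z) \<le> \<rho> * (\<rho> + \<mu>1 * \<rho>^2 / (1 - \<rho>))"
      using nG \<rho>0 by (intro mult_left_mono) auto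
    ultimately have "norm (F z) \<ge> (\<rho> - \<mu>2 * \<rho>^2 / (1 - \<rho>)) - \<rho> * (\<rho> + \<mu>1 * \<rho>^2 / (1 - \<rho>))"
      by linarith
    moreover have "(\<rho> - \<mu>2 * \<rho>^2 / (1 - \<rho>)) - \<rho> * (\<rho> + \<mu>1 * \<rho>^2 / (1 - \<rho>)) = \<sigma>3"
      unfolding assms(15) \<rho>_def[symmetric] \<mu>1_def[symmetric] \<mu>2_def[symmetric]
      by (simp add: algebra_simps power2_eq_square power3_eq_cube)
    ultimately show ?thesis by simp
  qed
  have cover: "ball 0 \<sigma>3 \<subseteq> F ` ball 0 \<rho>"
  proof
    fix w assume w: "w \<in> ball (0::complex) \<sigma>3"
    have sub: "ball 0 \<sigma>3 \<subseteq> F ` ball 0 \<rho> \<union> - K"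
    proof
      fix x assume x: "x \<in> ball (0::complex) \<sigma>3"
      show "x \<in> F ` ball 0 \<rho> \<union> - K"
      proof (cases "x \<in> K")
        case True
        then obtain z where z: "z \<in> cball 0 \<rho>" "x = F z" unfolding K_def by auto
        show ?thesis
        proof (cases "norm z = \<rho>")
          case True
          then show ?thesis using sph[OF True] x z by auto
        next
          case False
          then have "z \<in> ball 0 \<rho>" using z by auto
          then show ?thesis using z by auto
        qed
      qed auto
    qed
    have F0: "F 0 = 0" by (simp add: Fdef G0 H0)
    have "0 \<in> ball (0::complex) \<rho>" using \<rho>0 by simp
    then have "F 0 \<in> F ` ball 0 \<rho>" by (rule imageI)
    then have i1: "0 \<in> F ` ball 0 \<rho>" using F0 by simp
    have "0 < \<sigma>3" using w by (simp add: dist_norm) (meson norm_ge_zero order_le_less_trans)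
    then have i2: "(0::complex) \<in> ball 0 \<sigma>3" by simp
    have "0 \<in> F ` ball 0 \<rho> \<inter> ball 0 \<sigma>3" using i1 i2 by (rule IntI)
    then have "- K \<inter> ball 0 \<sigma>3 = {}"
      using connectedD[OF connected_ball openU _ _ sub] closedK UK by blast
    then show "w \<in> F ` ball 0 \<rho>" using sub w by blast
  qed
  show ?thesis using inj cover by (simp add: \<rho>_def)
qed

end
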